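(* Let $\mathcal G$ be the graph defined below. There is no mixed $1$-stack $1$-queue layout $(<,\{S,Q\})$ of $\mathcal G$ for which there exist an edge $(v_1,v_2)\in Q$ and three distinct pairs of twins $s_i,t_i$ ($1\le i\le 3$) with $v_1<s_i<v_2$ and $v_1<t_i<v_2$ for all $1\le i\le 3$.
   Context: Graph $\mathcal G$: take two vertices $A,B$ and $19$ copies of a gadget $H$, identified at $A$ and $B$. Each copy of $H$ consists of two further vertices $s,t$ (called twins) joined by the twin edge $(s,t)$, the edges $(A,s),(A,t),(B,s),(B,t)$, and seven further vertices (called connectors), each of degree $2$ and adjacent to exactly $s$ and $t$. ($A$ and $B$ are not adjacent.) For a vertex ordering $<$ and an edge $e$, let $L(e)<R(e)$ be its endpoints; edges $e,f$ cross if $L(e)<L(f)<R(e)<R(f)$ and nest if $L(e)<L(f)<R(f)<R(e)$. A stack is an edge set with no two crossing edges, a queue an edge set with no two nested edges. A mixed $1$-stack $1$-queue layout is a vertex ordering $<$ together with a partition of the edge set into a stack $S$ and a queue $Q$. *)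

theory Defs
  imports Main
begin

text \<open>Vertices of the graph G: the two poles A, B; for each copy i < 19 of the
gadget H the twins s_i, t_i; and the connectors c_{i,j}, j < 7, of copy i.\<close>

datatype vtx = VA | VB | Tw_s nat | Tw_t nat | Conn nat nat

definition ncopies :: nat where "ncopies = 19"
definition nconn :: nat where "nconn = 7"

definition G_V :: "vtx set" where
  "G_V = {VA, VB} \<union> {Tw_s i | i. i < ncopies} \<union> {Tw_t i | i. i < ncopies}
         \<union> {Conn i j | i j. i < ncopies \<and> j < nconn}"

text \<open>Edges are unordered pairs, represented as two-element sets.\<close>
definition G_E :: "vtx set set" where
  "G_E = {{Tw_s i, Tw_t i} | i. i < ncopies}
       \<union> {{VA, Tw_s i} | i. i < ncopies} \<union> {{VA, Tw_t i} | i. i < ncopies}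
       \<union> {{VB, Tw_s i} | i. i < ncopies} \<union> {{VB, Tw_t i} | i. i < ncopies}
       \<union> {{Conn i j, Tw_s i} | i j. i < ncopies \<and> j < nconn}
       \<union> {{Conn i j, Tw_t i} | i j. i < ncopies \<and> j < nconn}"

text \<open>A vertex ordering of V is given by an injective position map pos on V:
u < v iff pos u < pos v.\<close>
definition vertex_ordering :: "('v \<Rightarrow> nat) \<Rightarrow> 'v set \<Rightarrow> bool" where
  "vertex_ordering pos V \<longleftrightarrow> inj_on pos V"

definition Lpos :: "('v \<Rightarrow> nat) \<Rightarrow> 'v set \<Rightarrow> nat" where
  "Lpos pos e = Min (pos ` e)"
definition Rpos :: "('v \<Rightarrow> nat) \<Rightarrow> 'v set \<Rightarrow> nat" where
  "Rpos pos e = Max (pos ` e)"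

definition crossing :: "('v \<Rightarrow> nat) \<Rightarrow> 'v set \<Rightarrow> 'v set \<Rightarrow> bool" where
  "crossing pos e f \<longleftrightarrow> Lpos pos e < Lpos pos f \<and> Lpos pos f < Rpos pos e \<and> Rpos pos e < Rpos pos f"
definition nesting :: "('v \<Rightarrow> nat) \<Rightarrow> 'v set \<Rightarrow> 'v set \<Rightarrow> bool" where
  "nesting pos e f \<longleftrightarrow> Lpos pos e < Lpos pos f \<and> Lpos pos f < Rpos pos f \<and> Rpos pos f < Rpos pos e"

definition is_stack :: "('v \<Rightarrow> nat) \<Rightarrow> 'v set set \<Rightarrow> bool" where
  "is_stack pos S \<longleftrightarrow> (\<forall>e\<in>S. \<forall>f\<in>S. \<not> crossing pos e f)"
definition is_queue :: "('v \<Rightarrow> nat) \<Rightarrow> 'v set set \<Rightarrow> bool" where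
  "is_queue pos Q \<longleftrightarrow> (\<forall>e\<in>Q. \<forall>f\<in>Q. \<not> nesting pos e f)"

definition mixed_layout :: "'v set \<Rightarrow> 'v set set \<Rightarrow> ('v \<Rightarrow> nat) \<Rightarrow> 'v set set \<Rightarrow> 'v set set \<Rightarrow> bool" where
  "mixed_layout V E pos S Q \<longleftrightarrow> vertex_ordering pos V \<and> S \<union> Q = E \<and> S \<inter> Q = {}
     \<and> is_stack pos S \<and> is_queue pos Q"

end

theory Submission
  imports Defs
begin


definition C :: "int \<Rightarrow> int \<Rightarrow> int \<Rightarrow> int \<Rightarrow> bool" where
 "C u v x y \<longleftrightarrow> \<not>(u < x \<and> x < v \<and> v < y) \<and> \<not>(v < x \<and> x < u \<and> u < y) \<and> \<not>(u < y \<and> y < v \<and> v < x) \<and> \<not>(v < y \<and> y < u \<and> u < x)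
   \<and> \<not>(x < u \<and> u < y \<and> y < v) \<and> \<not>(y < u \<and> u < x \<and> x < v) \<and> \<not>(x < v \<and> v < y \<and> y < u) \<and> \<not>(y < v \<and> v < x \<and> x < u)"
definition N :: "int \<Rightarrow> int \<Rightarrow> int \<Rightarrow> int \<Rightarrow> bool" where
 "N u v x y \<longleftrightarrow> \<not>(u < x \<and> x < v \<and> u < y \<and> y < v) \<and> \<not>(v < x \<and> x < u \<and> v < y \<and> y < u)
   \<and> \<not>(x < u \<and> u < y \<and> x < v \<and> v < y) \<and> \<not>(y < u \<and> u < x \<and> y < v \<and> v < x)"

lemma Lpos2[simp]: "Lpos pos {u,v} = min (pos u) (pos v)" unfolding Lpos_def by simp
lemma Rpos2[simp]: "Rpos pos {u,v} = max (pos u) (pos v)" unfolding Rpos_def by simp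

lemma stackC:
  assumes "is_stack pos S" "{u,v} \<in> S" "{x,y} \<in> S"
  shows "C (int (pos u)) (int (pos v)) (int (pos x)) (int (pos y))"
proof -
  have 1: "\<not> crossing pos {u,v} {x,y}" "\<not> crossing pos {x,y} {u,v}"
    using assms unfolding is_stack_def by blast+
  show ?thesis using 1 unfolding C_def crossing_def by (auto simp: min_def max_def)
qed

lemma queueN:
  assumes "is_queue pos Q" "{u,v} \<in> Q" "{x,y} \<in> Q" "pos u \<noteq> pos v" "pos x \<noteq> pos y"
  shows "N (int (pos u)) (int (pos v)) (int (pos x)) (int (pos y))"
proof -
  have 1: "\<not> nesting pos {u,v} {x,y}" "\<not> nesting pos {x,y} {u,v}"
    using assms unfolding is_queue_def by blast+
  show ?thesis using 1 assms(4,5) unfolding N_def nesting_def by (auto simp: min_def max_def split: if_splits)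
qed

lemma AL_K:
  assumes "distinct [a,b,x,y,z::int]"
   "C a x b y" "C a x b z" "C b x a y" "C b x a z" "C a y b z" "C b y a z"
  shows False
  using assms unfolding C_def by (smt (verit) distinct.simps list.set insert_iff empty_iff)
lemma AL_mixed:
  assumes "distinct [m,m',a,b,a',b'::int]"
   "(m < a \<and> m < b \<and> m < a' \<and> m < b' \<and> m' < a \<and> m' < b \<and> m' < a' \<and> m' < b') \<or>
    (m > a \<and> m > b \<and> m > a' \<and> m > b' \<and> m' > a \<and> m' > b \<and> m' > a' \<and> m' > b')"
   "C a b a' b'" "C m a m' a'" "C m a a' b'" "C m' a' a b" "N m b m' b'"
  shows False
  using assms unfolding C_def N_def by (smt (verit) distinct.simps list.set insert_iff empty_iff)
lemma AL_SS:
  assumes "distinct [a,b,c,d::int]" "(c < a \<and> c < b \<and> d < a \<and> d < b) \<or> (c > a \<and> c > b \<and> d > a \<and> d > b)"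
   "C c a d b" "C c b d a"
  shows False
  using assms unfolding C_def by (smt (verit) distinct.simps list.set insert_iff empty_iff)
lemma AL_QQ:
  assumes "distinct [a,b,c,d::int]" "(c < a \<and> c < b \<and> d < a \<and> d < b) \<or> (c > a \<and> c > b \<and> d > a \<and> d > b)"
   "N c a d b" "N c b d a"
  shows False
  using assms unfolding N_def by (smt (verit) distinct.simps list.set insert_iff empty_iff)

lemma G_E_basic:
  assumes "{u,v} \<in> G_E" shows "u \<in> G_V \<and> v \<in> G_V \<and> u \<noteq> v"
  using assms unfolding G_E_def G_V_def by (auto simp: doubleton_eq_iff)

lemma G_E_edges:
  assumes "i < ncopies" "j < nconn"
  shows "{Tw_s i, Tw_t i} \<in> G_E" "{Conn i j, Tw_s i} \<in> G_E" "{Conn i j, Tw_t i} \<in> G_E"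
  using assms unfolding G_E_def by blast+

lemma G_V_mem:
  assumes "i < ncopies" "j < nconn"
  shows "Tw_s i \<in> G_V" "Tw_t i \<in> G_V" "Conn i j \<in> G_V"
  using assms unfolding G_V_def by blast+

lemma G_E_conn:
  assumes "f \<in> G_E" "Conn i j \<in> f" shows "Tw_s i \<in> f \<or> Tw_t i \<in> f"
  using assms unfolding G_E_def by auto

lemma G_E_two: assumes "f \<in> G_E" shows "\<exists>u v. f = {u,v}"
  using assms unfolding G_E_def by blast



lemma pigeon:
  assumes "\<forall>j<7. f j < (3::nat)"
  shows "\<exists>a b c. a<7 \<and> b<7 \<and> c<(7::nat) \<and> a\<noteq>b \<and> a\<noteq>c \<and> b\<noteq>c \<and> f a = f b \<and> f a = f c"
proof (rule ccontr)
  assume H: "\<not> ?thesis"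
  have le2: "card {j. j<7 \<and> f j = k} \<le> 2" for k
  proof (rule ccontr)
    assume "\<not> ?thesis"
    then have "3 \<le> card {j. j<7 \<and> f j = k}" by simp
    then obtain B where B: "B \<subseteq> {j. j<7 \<and> f j = k}" "card B = 3"
      using obtain_subset_with_card_n by metis
    then obtain x y z where "B = {x,y,z}" "x\<noteq>y" "y\<noteq>z" "x\<noteq>z" using card_3_iff by metis
    moreover have "x<7 \<and> y<7 \<and> z<7 \<and> f x = k \<and> f y = k \<and> f z = k" using B calculation by auto
    ultimately show False using H by metis
  qed
  have sub: "{..<7::nat} \<subseteq> {j. j<7 \<and> f j = 0} \<union> {j. j<7 \<and> f j = 1} \<union> {j. j<7 \<and> f j = 2}"
    using assms by (auto simp: less_Suc_eq numeral_3_eq_3)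
  have "card {..<7::nat} \<le> card ({j. j<7 \<and> f j = 0} \<union> {j. j<7 \<and> f j = 1} \<union> {j. j<7 \<and> f j = 2})"
    by (intro card_mono sub) auto
  also have "\<dots> \<le> card {j. j<7 \<and> f j = 0} + card {j. j<7 \<and> f j = 1} + card {j. j<7 \<and> f j = 2}"
    by (meson add_le_mono card_Un_le le_trans order_refl)
  finally show False using le2[of 0] le2[of 1] le2[of 2] by simp
qed

definition ins :: "(vtx \<Rightarrow> nat) \<Rightarrow> vtx set \<Rightarrow> vtx \<Rightarrow> bool" where
  "ins pos e v \<longleftrightarrow> Lpos pos e < pos v \<and> pos v < Rpos pos e"

definition mixedc :: "vtx set set \<Rightarrow> nat \<Rightarrow> nat \<Rightarrow> bool" where
  "mixedc S i j \<longleftrightarrow> ({Conn i j, Tw_s i} \<in> S) \<noteq> ({Conn i j, Tw_t i} \<in> S)"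

context
  fixes pos :: "vtx \<Rightarrow> nat" and S Q :: "vtx set set" and e :: "vtx set"
  assumes lay: "mixed_layout G_V G_E pos S Q" and eQ: "e \<in> Q"
begin

lemma lay_facts: "is_stack pos S" "is_queue pos Q" "inj_on pos G_V" "S \<union> Q = G_E" "S \<inter> Q = {}"
  using lay unfolding mixed_layout_def vertex_ordering_def by auto

lemma e_edge: "e \<in> G_E" using eQ lay_facts by blast

lemma posne: "x \<in> G_V \<Longrightarrow> y \<in> G_V \<Longrightarrow> x \<noteq> y \<Longrightarrow> int (pos x) \<noteq> int (pos y)"
  using lay_facts(3) by (auto dest: inj_onD)

lemma notS_Q: "f \<in> G_E \<Longrightarrow> f \<notin> S \<Longrightarrow> f \<in> Q" using lay_facts by blast

lemma inS: assumes "{u,v} \<in> G_E" "ins pos e u" "ins pos e v" shows "{u,v} \<in> S"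
proof (rule ccontr)
  assume "{u,v} \<notin> S"
  then have Qf: "{u,v} \<in> Q" using notS_Q assms(1) by blast
  have "u \<in> G_V" "v \<in> G_V" "u \<noteq> v" using G_E_basic[OF assms(1)] by auto
  then have "pos u \<noteq> pos v" using lay_facts(3) by (auto dest: inj_onD)
  then have "nesting pos e {u,v}" using assms(2,3) unfolding nesting_def ins_def
    by (auto simp: min_def max_def)
  then show False using lay_facts(2) eQ Qf unfolding is_queue_def by blast
qed

lemma end_not_ins: assumes "w \<in> e" shows "\<not> ins pos e w"
proof -
  obtain u v where "e = {u,v}" using G_E_two[OF e_edge] by blast
  then show ?thesis using assms unfolding ins_def by (auto simp: min_def max_def)
qed

lemma conn_side:
  assumes "i < ncopies" "j < nconn" "ins pos e (Tw_s i)" "ins pos e (Tw_t i)"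
  shows "pos (Conn i j) < Lpos pos e \<or> ins pos e (Conn i j) \<or> Rpos pos e < pos (Conn i j)"
proof -
  obtain u v where ue: "e = {u,v}" using G_E_two[OF e_edge] by blast
  have uv: "u \<in> G_V" "v \<in> G_V" using G_E_basic e_edge ue by auto
  have cV: "Conn i j \<in> G_V" using G_V_mem assms by auto
  have "Conn i j \<notin> e"
  proof
    assume "Conn i j \<in> e"
    then have "Tw_s i \<in> e \<or> Tw_t i \<in> e" using G_E_conn e_edge by blast
    then show False using end_not_ins assms(3,4) by blast
  qed
  then have "pos (Conn i j) \<noteq> pos u" "pos (Conn i j) \<noteq> pos v"
    using lay_facts(3) uv cV ue by (auto dest: inj_onD)
  then show ?thesis unfolding ins_def ue by (auto simp: min_def max_def)
qed

lemma mixed_core: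
  assumes "i \<noteq> k" "i < ncopies" "k < ncopies" "j < nconn" "j' < nconn"
    "a \<in> {Tw_s i, Tw_t i}" "b \<in> {Tw_s i, Tw_t i}" "a \<noteq> b"
    "a' \<in> {Tw_s k, Tw_t k}" "b' \<in> {Tw_s k, Tw_t k}" "a' \<noteq> b'"
    "{Conn i j, a} \<in> S" "{Conn i j, b} \<in> Q" "{Conn k j', a'} \<in> S" "{Conn k j', b'} \<in> Q"
    "ins pos e a" "ins pos e b" "ins pos e a'" "ins pos e b'"
    "(pos (Conn i j) < Lpos pos e \<and> pos (Conn k j') < Lpos pos e) \<or>
     (Rpos pos e < pos (Conn i j) \<and> Rpos pos e < pos (Conn k j'))"
  shows False
proof -
  have ab: "{a,b} = {Tw_s i, Tw_t i}" using assms(6-8) by auto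
  have ab': "{a',b'} = {Tw_s k, Tw_t k}" using assms(9-11) by auto
  have "{a,b} \<in> G_E" using ab G_E_edges(1)[OF assms(2,4)] by simp
  then have t1: "{a,b} \<in> S" using inS assms(16,17) by blast
  have "{a',b'} \<in> G_E" using ab' G_E_edges(1)[OF assms(3,5)] by simp
  then have t2: "{a',b'} \<in> S" using inS assms(18,19) by blast
  have V: "a \<in> G_V" "b \<in> G_V" "a' \<in> G_V" "b' \<in> G_V" "Conn i j \<in> G_V" "Conn k j' \<in> G_V"
    using G_V_mem assms(2-7,9,10) by auto
  have ne: "a \<noteq> a'" "a \<noteq> b'" "b \<noteq> a'" "b \<noteq> b'" "Conn i j \<noteq> Conn k j'"
     "Conn i j \<noteq> a" "Conn i j \<noteq> b" "Conn i j \<noteq> a'" "Conn i j \<noteq> b'"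
     "Conn k j' \<noteq> a" "Conn k j' \<noteq> b" "Conn k j' \<noteq> a'" "Conn k j' \<noteq> b'"
    using assms(1,6,7,9,10) by auto
  have D: "distinct [int (pos (Conn i j)), int (pos (Conn k j')), int (pos a), int (pos b), int (pos a'), int (pos b')]"
    using posne[OF V(5) V(6) ne(5)] posne[OF V(5) V(1) ne(6)] posne[OF V(5) V(2) ne(7)]
      posne[OF V(5) V(3) ne(8)] posne[OF V(5) V(4) ne(9)]
      posne[OF V(6) V(1) ne(10)] posne[OF V(6) V(2) ne(11)]
      posne[OF V(6) V(3) ne(12)] posne[OF V(6) V(4) ne(13)]
      posne[OF V(1) V(2) assms(8)] posne[OF V(3) V(4) assms(11)]
      posne[OF V(1) V(3) ne(1)] posne[OF V(1) V(4) ne(2)] posne[OF V(2) V(3) ne(3)] posne[OF V(2) V(4) ne(4)]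
    by auto
  have c1: "C (int (pos a)) (int (pos b)) (int (pos a')) (int (pos b'))" using stackC[OF lay_facts(1) t1 t2] .
  have c2: "C (int (pos (Conn i j))) (int (pos a)) (int (pos (Conn k j'))) (int (pos a'))"
    using stackC[OF lay_facts(1) assms(12) assms(14)] .
  have c3: "C (int (pos (Conn i j))) (int (pos a)) (int (pos a')) (int (pos b'))"
    using stackC[OF lay_facts(1) assms(12) t2] .
  have c4: "C (int (pos (Conn k j'))) (int (pos a')) (int (pos a)) (int (pos b))"
    using stackC[OF lay_facts(1) assms(14) t1] .
  have n1: "N (int (pos (Conn i j))) (int (pos b)) (int (pos (Conn k j'))) (int (pos b'))"
    using queueN[OF lay_facts(2) assms(13) assms(15)] D by auto
  have sd: "(int (pos (Conn i j)) < int (pos a) \<and> int (pos (Conn i j)) < int (pos b) \<and> int (pos (Conn i j)) < int (pos a') \<and> int (pos (Conn i j)) < int (pos b') \<and>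
       int (pos (Conn k j')) < int (pos a) \<and> int (pos (Conn k j')) < int (pos b) \<and> int (pos (Conn k j')) < int (pos a') \<and> int (pos (Conn k j')) < int (pos b')) \<or>
      (int (pos (Conn i j)) > int (pos a) \<and> int (pos (Conn i j)) > int (pos b) \<and> int (pos (Conn i j)) > int (pos a') \<and> int (pos (Conn i j)) > int (pos b') \<and>
       int (pos (Conn k j')) > int (pos a) \<and> int (pos (Conn k j')) > int (pos b) \<and> int (pos (Conn k j')) > int (pos a') \<and> int (pos (Conn k j')) > int (pos b'))"
    using assms(16-20) unfolding ins_def by auto
  show False using AL_mixed[OF D sd c1 c2 c3 c4 n1] .
qed

lemma mixed_obtain:
  assumes "mixedc S i j" "i < ncopies" "j < nconn"
  obtains a b where "a \<in> {Tw_s i, Tw_t i}" "b \<in> {Tw_s i, Tw_t i}" "a \<noteq> b"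
    "{Conn i j, a} \<in> S" "{Conn i j, b} \<in> Q"
proof (cases "{Conn i j, Tw_s i} \<in> S")
  case True
  then have "{Conn i j, Tw_t i} \<in> Q" using assms notS_Q G_E_edges unfolding mixedc_def by blast
  then show ?thesis using that[of "Tw_s i" "Tw_t i"] True by auto
next
  case False
  then have "{Conn i j, Tw_s i} \<in> Q" "{Conn i j, Tw_t i} \<in> S"
    using assms notS_Q G_E_edges unfolding mixedc_def by blast+
  then show ?thesis using that[of "Tw_t i" "Tw_s i"] by auto
qed

lemma mixed2:
  assumes "i \<noteq> k" "i < ncopies" "k < ncopies" "j < nconn" "j' < nconn"
    "mixedc S i j" "mixedc S k j'"
    "ins pos e (Tw_s i)" "ins pos e (Tw_t i)" "ins pos e (Tw_s k)" "ins pos e (Tw_t k)"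
    "(pos (Conn i j) < Lpos pos e \<and> pos (Conn k j') < Lpos pos e) \<or>
     (Rpos pos e < pos (Conn i j) \<and> Rpos pos e < pos (Conn k j'))"
  shows False
proof -
  obtain a b where ab: "a \<in> {Tw_s i, Tw_t i}" "b \<in> {Tw_s i, Tw_t i}" "a \<noteq> b"
    "{Conn i j, a} \<in> S" "{Conn i j, b} \<in> Q" using mixed_obtain assms(6,2,4) by blast
  obtain a' b' where ab': "a' \<in> {Tw_s k, Tw_t k}" "b' \<in> {Tw_s k, Tw_t k}" "a' \<noteq> b'"
    "{Conn k j', a'} \<in> S" "{Conn k j', b'} \<in> Q" using mixed_obtain assms(7,3,5) by blast
  have "ins pos e a" "ins pos e b" "ins pos e a'" "ins pos e b'" using ab ab' assms(8-11) by auto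
  then show False using mixed_core[OF assms(1-5) ab(1-3) ab'(1-3) ab(4,5) ab'(4,5)] assms(12) by blast
qed

lemma pure2:
  assumes "i < ncopies" "j \<noteq> j'" "j < nconn" "j' < nconn"
    "ins pos e (Tw_s i)" "ins pos e (Tw_t i)"
    "(pos (Conn i j) < Lpos pos e \<and> pos (Conn i j') < Lpos pos e) \<or>
     (Rpos pos e < pos (Conn i j) \<and> Rpos pos e < pos (Conn i j'))"
    "\<not> mixedc S i j" "\<not> mixedc S i j'"
    "({Conn i j, Tw_s i} \<in> S) = ({Conn i j', Tw_s i} \<in> S)"
  shows False
proof -
  have V: "Tw_s i \<in> G_V" "Tw_t i \<in> G_V" "Conn i j \<in> G_V" "Conn i j' \<in> G_V"
    using G_V_mem assms(1,3,4) by auto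
  have D: "distinct [int (pos (Tw_s i)), int (pos (Tw_t i)), int (pos (Conn i j)), int (pos (Conn i j'))]"
    using posne[OF V(1) V(2)] posne[OF V(1) V(3)] posne[OF V(1) V(4)] posne[OF V(2) V(3)]
      posne[OF V(2) V(4)] posne[OF V(3) V(4)] assms(2) by auto
  have sd: "(int (pos (Conn i j)) < int (pos (Tw_s i)) \<and> int (pos (Conn i j)) < int (pos (Tw_t i)) \<and>
        int (pos (Conn i j')) < int (pos (Tw_s i)) \<and> int (pos (Conn i j')) < int (pos (Tw_t i))) \<or>
       (int (pos (Conn i j)) > int (pos (Tw_s i)) \<and> int (pos (Conn i j)) > int (pos (Tw_t i)) \<and>
        int (pos (Conn i j')) > int (pos (Tw_s i)) \<and> int (pos (Conn i j')) > int (pos (Tw_t i)))"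
    using assms(5-7) unfolding ins_def by auto
  have E: "{Conn i j, Tw_s i} \<in> G_E" "{Conn i j, Tw_t i} \<in> G_E" "{Conn i j', Tw_s i} \<in> G_E" "{Conn i j', Tw_t i} \<in> G_E"
    using G_E_edges assms(1,3,4) by auto
  show False
  proof (cases "{Conn i j, Tw_s i} \<in> S")
    case True
    then have S4: "{Conn i j, Tw_s i} \<in> S" "{Conn i j, Tw_t i} \<in> S" "{Conn i j', Tw_s i} \<in> S" "{Conn i j', Tw_t i} \<in> S"
      using assms(8-10) unfolding mixedc_def by auto
    show False using AL_SS[OF D sd stackC[OF lay_facts(1) S4(1) S4(4)] stackC[OF lay_facts(1) S4(2) S4(3)]] .
  next
    case False
    then have "{Conn i j, Tw_s i} \<notin> S" "{Conn i j, Tw_t i} \<notin> S" "{Conn i j', Tw_s i} \<notin> S" "{Conn i j', Tw_t i} \<notin> S"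
      using assms(8-10) unfolding mixedc_def by auto
    then have Q4: "{Conn i j, Tw_s i} \<in> Q" "{Conn i j, Tw_t i} \<in> Q" "{Conn i j', Tw_s i} \<in> Q" "{Conn i j', Tw_t i} \<in> Q"
      using E notS_Q by auto
    have n1: "N (int (pos (Conn i j))) (int (pos (Tw_s i))) (int (pos (Conn i j'))) (int (pos (Tw_t i)))"
      using queueN[OF lay_facts(2) Q4(1) Q4(4)] D by auto
    have n2: "N (int (pos (Conn i j))) (int (pos (Tw_t i))) (int (pos (Conn i j'))) (int (pos (Tw_s i)))"
      using queueN[OF lay_facts(2) Q4(2) Q4(3)] D by auto
    show False using AL_QQ[OF D sd n1 n2] .
  qed
qed

lemma K23:
  assumes "i < ncopies" "j1 < nconn" "j2 < nconn" "j3 < nconn" "j1 \<noteq> j2" "j1 \<noteq> j3" "j2 \<noteq> j3"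
    "ins pos e (Tw_s i)" "ins pos e (Tw_t i)"
    "ins pos e (Conn i j1)" "ins pos e (Conn i j2)" "ins pos e (Conn i j3)"
  shows False
proof -
  have V: "Tw_s i \<in> G_V" "Tw_t i \<in> G_V" "Conn i j1 \<in> G_V" "Conn i j2 \<in> G_V" "Conn i j3 \<in> G_V"
    using G_V_mem assms(1-4) by auto
  have D: "distinct [int (pos (Tw_s i)), int (pos (Tw_t i)), int (pos (Conn i j1)), int (pos (Conn i j2)), int (pos (Conn i j3))]"
    using posne[OF V(1) V(2)] posne[OF V(1) V(3)] posne[OF V(1) V(4)] posne[OF V(1) V(5)]
      posne[OF V(2) V(3)] posne[OF V(2) V(4)] posne[OF V(2) V(5)]
      posne[OF V(3) V(4)] posne[OF V(3) V(5)] posne[OF V(4) V(5)] assms(5-7) by auto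
  have S: "{Conn i j1, Tw_s i} \<in> S" "{Conn i j1, Tw_t i} \<in> S"
     "{Conn i j2, Tw_s i} \<in> S" "{Conn i j2, Tw_t i} \<in> S"
     "{Conn i j3, Tw_s i} \<in> S" "{Conn i j3, Tw_t i} \<in> S"
    using inS[OF G_E_edges(2)[OF assms(1,2)] assms(10,8)] inS[OF G_E_edges(3)[OF assms(1,2)] assms(10,9)]
      inS[OF G_E_edges(2)[OF assms(1,3)] assms(11,8)] inS[OF G_E_edges(3)[OF assms(1,3)] assms(11,9)]
      inS[OF G_E_edges(2)[OF assms(1,4)] assms(12,8)] inS[OF G_E_edges(3)[OF assms(1,4)] assms(12,9)] by auto
  have S': "{Tw_s i, Conn i j1} \<in> S" "{Tw_t i, Conn i j1} \<in> S"
     "{Tw_s i, Conn i j2} \<in> S" "{Tw_t i, Conn i j2} \<in> S"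
     "{Tw_s i, Conn i j3} \<in> S" "{Tw_t i, Conn i j3} \<in> S"
    using S by (simp_all add: insert_commute)
  note sc = stackC[OF lay_facts(1)]
  show False using AL_K[OF D sc[OF S'(1) S'(4)] sc[OF S'(1) S'(6)] sc[OF S'(2) S'(3)] sc[OF S'(2) S'(5)]
      sc[OF S'(3) S'(6)] sc[OF S'(4) S'(5)]] .
qed

lemma pure_pair:
  assumes "i < ncopies" "ins pos e (Tw_s i)" "ins pos e (Tw_t i)"
    "\<forall>j<nconn. (pos (Conn i j) < Lpos pos e \<or> Rpos pos e < pos (Conn i j)) \<longrightarrow> \<not> mixedc S i j"
  shows False
proof -
  define f where "f j = (if pos (Conn i j) < Lpos pos e then 0 else if Rpos pos e < pos (Conn i j) then 1 else (2::nat))" for j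
  have "\<forall>j<7. f j < 3" by (simp add: f_def)
  then obtain a b c where abc: "a<7" "b<7" "c<7" "a\<noteq>b" "a\<noteq>c" "b\<noteq>c" "f a = f b" "f a = f c"
    using pigeon by blast
  have lt: "a < nconn" "b < nconn" "c < nconn" using abc by (simp_all add: nconn_def)
  have fL: "pos (Conn i x) < Lpos pos e" if "f x = 0" for x using that by (simp add: f_def split: if_splits)
  have fR: "Rpos pos e < pos (Conn i x)" if "f x = 1" for x using that by (simp add: f_def split: if_splits)
  have fI: "\<not> pos (Conn i x) < Lpos pos e \<and> \<not> Rpos pos e < pos (Conn i x)" if "f x = 2" for x
    using that by (simp add: f_def split: if_splits)
  have fr: "f a = 0 \<or> f a = 1 \<or> f a = 2" by (simp add: f_def)
  then show False
  proof (elim disjE)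
    assume A: "f a = 0"
    then have sd: "pos (Conn i a) < Lpos pos e" "pos (Conn i b) < Lpos pos e" "pos (Conn i c) < Lpos pos e"
      using abc(7,8) fL by metis+
    have nm: "\<not> mixedc S i a" "\<not> mixedc S i b" "\<not> mixedc S i c" using assms(4) lt sd by auto
    have d1: "pos (Conn i x) < Lpos pos e \<and> pos (Conn i y) < Lpos pos e \<or> Rpos pos e < pos (Conn i x) \<and> Rpos pos e < pos (Conn i y)"
      if "pos (Conn i x) < Lpos pos e" "pos (Conn i y) < Lpos pos e" for x y :: nat using that by blast
    have "(({Conn i a, Tw_s i} \<in> S) = ({Conn i b, Tw_s i} \<in> S)) \<or> (({Conn i a, Tw_s i} \<in> S) = ({Conn i c, Tw_s i} \<in> S))
       \<or> (({Conn i b, Tw_s i} \<in> S) = ({Conn i c, Tw_s i} \<in> S))" by auto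
    then show False
    proof (elim disjE)
      assume h: "({Conn i a, Tw_s i} \<in> S) = ({Conn i b, Tw_s i} \<in> S)"
      show False by (rule pure2[OF assms(1) abc(4) lt(1) lt(2) assms(2,3) d1[OF sd(1) sd(2)] nm(1) nm(2) h])
    next
      assume h: "({Conn i a, Tw_s i} \<in> S) = ({Conn i c, Tw_s i} \<in> S)"
      show False by (rule pure2[OF assms(1) abc(5) lt(1) lt(3) assms(2,3) d1[OF sd(1) sd(3)] nm(1) nm(3) h])
    next
      assume h: "({Conn i b, Tw_s i} \<in> S) = ({Conn i c, Tw_s i} \<in> S)"
      show False by (rule pure2[OF assms(1) abc(6) lt(2) lt(3) assms(2,3) d1[OF sd(2) sd(3)] nm(2) nm(3) h])
    qed
  next
    assume A: "f a = 1"
    then have sd: "Rpos pos e < pos (Conn i a)" "Rpos pos e < pos (Conn i b)" "Rpos pos e < pos (Conn i c)"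
      using abc(7,8) fR by metis+
    have nm: "\<not> mixedc S i a" "\<not> mixedc S i b" "\<not> mixedc S i c" using assms(4) lt sd by auto
    have d1: "pos (Conn i x) < Lpos pos e \<and> pos (Conn i y) < Lpos pos e \<or> Rpos pos e < pos (Conn i x) \<and> Rpos pos e < pos (Conn i y)"
      if "Rpos pos e < pos (Conn i x)" "Rpos pos e < pos (Conn i y)" for x y :: nat using that by blast
    have "(({Conn i a, Tw_s i} \<in> S) = ({Conn i b, Tw_s i} \<in> S)) \<or> (({Conn i a, Tw_s i} \<in> S) = ({Conn i c, Tw_s i} \<in> S))
       \<or> (({Conn i b, Tw_s i} \<in> S) = ({Conn i c, Tw_s i} \<in> S))" by auto
    then show False
    proof (elim disjE)
      assume h: "({Conn i a, Tw_s i} \<in> S) = ({Conn i b, Tw_s i} \<in> S)"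
      show False by (rule pure2[OF assms(1) abc(4) lt(1) lt(2) assms(2,3) d1[OF sd(1) sd(2)] nm(1) nm(2) h])
    next
      assume h: "({Conn i a, Tw_s i} \<in> S) = ({Conn i c, Tw_s i} \<in> S)"
      show False by (rule pure2[OF assms(1) abc(5) lt(1) lt(3) assms(2,3) d1[OF sd(1) sd(3)] nm(1) nm(3) h])
    next
      assume h: "({Conn i b, Tw_s i} \<in> S) = ({Conn i c, Tw_s i} \<in> S)"
      show False by (rule pure2[OF assms(1) abc(6) lt(2) lt(3) assms(2,3) d1[OF sd(2) sd(3)] nm(2) nm(3) h])
    qed
  next
    assume A: "f a = 2"
    then have sd: "\<not> pos (Conn i a) < Lpos pos e \<and> \<not> Rpos pos e < pos (Conn i a)"
      "\<not> pos (Conn i b) < Lpos pos e \<and> \<not> Rpos pos e < pos (Conn i b)"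
      "\<not> pos (Conn i c) < Lpos pos e \<and> \<not> Rpos pos e < pos (Conn i c)"
      using abc(7,8) fI by metis+
    then have "ins pos e (Conn i a)" "ins pos e (Conn i b)" "ins pos e (Conn i c)"
      using conn_side[OF assms(1) _ assms(2,3)] lt by blast+
    then show False using K23[OF assms(1) lt abc(4-6) assms(2,3)] by blast
  qed
qed

end


theorem lemma3:
  "\<not> (\<exists>pos S Q. mixed_layout G_V G_E pos S Q \<and>
        (\<exists>e\<in>Q. \<exists>i1 i2 i3. i1 < ncopies \<and> i2 < ncopies \<and> i3 < ncopies \<and>
            i1 \<noteq> i2 \<and> i1 \<noteq> i3 \<and> i2 \<noteq> i3 \<and>
            (\<forall>i\<in>{i1, i2, i3}.
               Lpos pos e < pos (Tw_s i) \<and> pos (Tw_s i) < Rpos pos e \<and>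
               Lpos pos e < pos (Tw_t i) \<and> pos (Tw_t i) < Rpos pos e)))"
proof
  assume "\<exists>pos S Q. mixed_layout G_V G_E pos S Q \<and>
        (\<exists>e\<in>Q. \<exists>i1 i2 i3. i1 < ncopies \<and> i2 < ncopies \<and> i3 < ncopies \<and>
            i1 \<noteq> i2 \<and> i1 \<noteq> i3 \<and> i2 \<noteq> i3 \<and>
            (\<forall>i\<in>{i1, i2, i3}.
               Lpos pos e < pos (Tw_s i) \<and> pos (Tw_s i) < Rpos pos e \<and>
               Lpos pos e < pos (Tw_t i) \<and> pos (Tw_t i) < Rpos pos e))"
  then obtain pos S Q e i1 i2 i3 where lay: "mixed_layout G_V G_E pos S Q" and eQ: "e \<in> Q"
    and ii: "i1 < ncopies" "i2 < ncopies" "i3 < ncopies" "i1 \<noteq> i2" "i1 \<noteq> i3" "i2 \<noteq> i3"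
    and inn: "\<forall>i\<in>{i1, i2, i3}.
               Lpos pos e < pos (Tw_s i) \<and> pos (Tw_s i) < Rpos pos e \<and>
               Lpos pos e < pos (Tw_t i) \<and> pos (Tw_t i) < Rpos pos e"
    by blast
  have insv: "ins pos e (Tw_s i)" "ins pos e (Tw_t i)" "i < ncopies" if "i \<in> {i1,i2,i3}" for i
    using inn that ii unfolding ins_def by auto
  define LMx where "LMx i \<longleftrightarrow> (\<exists>j<nconn. pos (Conn i j) < Lpos pos e \<and> mixedc S i j)" for i
  define RMx where "RMx i \<longleftrightarrow> (\<exists>j<nconn. Rpos pos e < pos (Conn i j) \<and> mixedc S i j)" for i
  have noLM: "\<not> (LMx a \<and> LMx b)" if "a \<in> {i1,i2,i3}" "b \<in> {i1,i2,i3}" "a \<noteq> b" for a b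
  proof
    assume "LMx a \<and> LMx b"
    then obtain j j' where jj: "j < nconn" "j' < nconn" "pos (Conn a j) < Lpos pos e" "mixedc S a j"
      "pos (Conn b j') < Lpos pos e" "mixedc S b j'" unfolding LMx_def by blast
    show False using mixed2[OF lay eQ that(3) insv(3)[OF that(1)] insv(3)[OF that(2)] jj(1,2,4,6)
      insv(1,2)[OF that(1)] insv(1,2)[OF that(2)]] jj(3,5) by blast
  qed
  have noRM: "\<not> (RMx a \<and> RMx b)" if "a \<in> {i1,i2,i3}" "b \<in> {i1,i2,i3}" "a \<noteq> b" for a b
  proof
    assume "RMx a \<and> RMx b"
    then obtain j j' where jj: "j < nconn" "j' < nconn" "Rpos pos e < pos (Conn a j)" "mixedc S a j"
      "Rpos pos e < pos (Conn b j')" "mixedc S b j'" unfolding RMx_def by blast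
    show False using mixed2[OF lay eQ that(3) insv(3)[OF that(1)] insv(3)[OF that(2)] jj(1,2,4,6)
      insv(1,2)[OF that(1)] insv(1,2)[OF that(2)]] jj(3,5) by blast
  qed
  have m: "i1 \<in> {i1,i2,i3}" "i2 \<in> {i1,i2,i3}" "i3 \<in> {i1,i2,i3}" by auto
  have "(\<not> LMx i1 \<and> \<not> RMx i1) \<or> (\<not> LMx i2 \<and> \<not> RMx i2) \<or> (\<not> LMx i3 \<and> \<not> RMx i3)"
    using noLM[OF m(1) m(2) ii(4)] noLM[OF m(1) m(3) ii(5)] noLM[OF m(2) m(3) ii(6)]
      noRM[OF m(1) m(2) ii(4)] noRM[OF m(1) m(3) ii(5)] noRM[OF m(2) m(3) ii(6)] by blast
  then obtain i where i: "i \<in> {i1,i2,i3}" "\<not> LMx i" "\<not> RMx i" using m by blast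
  have "\<forall>j<nconn. (pos (Conn i j) < Lpos pos e \<or> Rpos pos e < pos (Conn i j)) \<longrightarrow> \<not> mixedc S i j"
    using i(2,3) unfolding LMx_def RMx_def by blast
  then show False using pure_pair[OF lay eQ insv(3)[OF i(1)] insv(1,2)[OF i(1)]] by blast
qed
end
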